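(* Let $X$ be a topological quandle. (1) If $X$ has the discrete topology, then $\bar H^n_Q(X)=0$ and $\bar H^n_W(X)=\bar C^n_W(X)$ for $n\ge1$ and $W=R,D$, and $\bar H^0_Q(X)=\bar H^0_R(X)=\bar C^0_R(X)$. (2) If $X$ has the indiscrete topology, then $\bar H^n_W(X)\cong H^{n+1}_W(X)$ for $n\ge0$ and $W=R,D,Q$. (3) If the underlying quandle structure of $X$ is trivial ($x\triangleright y=x$ for all $x,y$), then $\bar H^n_W(X)=\bar C^n_W(X)$ for $W=R,D,Q$.
   Context: A quandle is a set with a binary operation $\triangleright$ such that $x\triangleright x=x$, each $\beta_y(x)=x\triangleright y$ is bijective, and $(x\triangleright y)\triangleright z=(x\triangleright z)\triangleright(y\triangleright z)$. A topological quandle is a topological space with a continuous quandle operation such that every $\beta_y$ is a homeomorphism. For a topological quandle $X$, $\bar C^R_n(X)$ is the free abelian group on singular $n$-simplices $\sigma:\Delta^n\to X$ modulo identifying two simplices with the same ordered vertex tuple; thus it is free abelian on the tuples $\sigma_{[x_1,\dots,x_{n+1}]}$ ($x_i=\sigma(e_{i-1})$) that are vertex tuples of some singular $n$-simplex. Its boundary is $\partial_n\sigma_{[x_1,\dots,x_{n+1}]}=\sum_{i=2}^{n+1}(-1)^i\big(\sigma_{[x_1,\dots,\hat{x_i},\dots,x_{n+1}]}-\sigma_{[x_1\triangleright x_i,\dots,x_{i-1}\triangleright x_i,x_{i+1},\dots,x_{n+1}]}\big)$. For $n\ge1$, $\bar C^D_n(X)$ is generated by $\sigma_{[x_1,\dots,x_{n+1}]}$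 with $x_i=x_{i+1}$ for some $i\in\{1,\dots,n\}$, and $\bar C^D_0(X)=0$; $\bar C^Q_n(X)=\bar C^R_n(X)/\bar C^D_n(X)$. The cochain groups are $\bar C^n_W(X)=\mathrm{Hom}(\bar C^W_n(X),\mathbb{Z})$ with $\delta^n f=f\circ\partial_{n+1}$, and $\bar H^n_W(X)$ is the resulting cohomology. The rack complex $C^R_n(X)$ is free abelian on $X^n$ with boundary $\partial^R_n(x_1,\dots,x_n)=\sum_{i=2}^n(-1)^i[(x_1,\dots,\hat{x_i},\dots,x_n)-(x_1\triangleright x_i,\dots,x_{i-1}\triangleright x_i,x_{i+1},\dots,x_n)]$; $C^D_n(X)$ is generated by tuples with $x_i=x_{i+1}$ for some $i\in\{1,\dots,n-1\}$; $C^Q_n=C^R_n/C^D_n$; $H^n_W(X)$ is the cohomology of $\mathrm{Hom}(C^W_*(X),\mathbb{Z})$. *)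

theory Defs
  imports "HOL-Homology.Homology" "HOL-Algebra.Free_Abelian_Groups"
    "HOL-Algebra.Elementary_Groups" "HOL-Algebra.Coset"
begin

text \<open>A quandle on the set S with operation op (op x y stands for x tri y).\<close>
definition quandle :: "'a set \<Rightarrow> ('a \<Rightarrow> 'a \<Rightarrow> 'a) \<Rightarrow> bool" where
  "quandle S op \<longleftrightarrow>
     (\<forall>x\<in>S. \<forall>y\<in>S. op x y \<in> S) \<and>
     (\<forall>x\<in>S. op x x = x) \<and>
     (\<forall>y\<in>S. bij_betw (\<lambda>x. op x y) S S) \<and>
     (\<forall>x\<in>S. \<forall>y\<in>S. \<forall>z\<in>S. op (op x y) z = op (op x z) (op y z))"

definition topological_quandle :: "'a topology \<Rightarrow> ('a \<Rightarrow> 'a \<Rightarrow> 'a) \<Rightarrow> bool" where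
  "topological_quandle X op \<longleftrightarrow>
     quandle (topspace X) op \<and>
     continuous_map (prod_topology X X) X (\<lambda>(x, y). op x y) \<and>
     (\<forall>y\<in>topspace X. homeomorphic_map X X (\<lambda>x. op x y))"

text \<open>For a tuple xs = [x_1,...,x_m] and 2 <= i <= m: delete the i-th entry,
  resp. act by x_i on the entries before position i and delete x_i.\<close>
definition tuple_del :: "nat \<Rightarrow> 'a list \<Rightarrow> 'a list" where
  "tuple_del i xs = take (i - 1) xs @ drop i xs"

definition tuple_act :: "('a \<Rightarrow> 'a \<Rightarrow> 'a) \<Rightarrow> nat \<Rightarrow> 'a list \<Rightarrow> 'a list" where
  "tuple_act op i xs = map (\<lambda>x. op x (xs ! (i - 1))) (take (i - 1) xs) @ drop i xs"

text \<open>Boundary of a single tuple (same formula for the rack complex and the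
  simplicial complex; only the length/degree bookkeeping differs).\<close>
definition tuple_bd_gen :: "('a \<Rightarrow> 'a \<Rightarrow> 'a) \<Rightarrow> 'a list \<Rightarrow> 'a list \<Rightarrow>\<^sub>0 int" where
  "tuple_bd_gen op xs =
     (\<Sum>i\<in>{2..length xs}. frag_cmul ((-1) ^ i)
         (frag_of (tuple_del i xs) - frag_of (tuple_act op i xs)))"

definition tuple_bd :: "('a \<Rightarrow> 'a \<Rightarrow> 'a) \<Rightarrow> ('a list \<Rightarrow>\<^sub>0 int) \<Rightarrow> 'a list \<Rightarrow>\<^sub>0 int" where
  "tuple_bd op = frag_extend (tuple_bd_gen op)"

definition degenerate_tuple :: "'a list \<Rightarrow> bool" where
  "degenerate_tuple xs \<longleftrightarrow> (\<exists>i. Suc i < length xs \<and> xs ! i = xs ! Suc i)"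

text \<open>Vertex tuples of singular n-simplices in X (lists of length n+1).
  The i-th vertex of the standard simplex is the i-th unit vector.\<close>
definition simplex_vertex_tuples :: "'a topology \<Rightarrow> nat \<Rightarrow> 'a list set" where
  "simplex_vertex_tuples X n =
     {map (\<lambda>i. \<sigma> (\<lambda>j. if j = i then 1 else 0)) [0..<Suc n] | \<sigma>. singular_simplex n X \<sigma>}"

definition barR_gens :: "'a topology \<Rightarrow> nat \<Rightarrow> 'a list set" where
  "barR_gens X n = simplex_vertex_tuples X n"

definition R_gens :: "'a topology \<Rightarrow> nat \<Rightarrow> 'a list set" where
  "R_gens X n = {xs. length xs = n \<and> set xs \<subseteq> topspace X}"

definition chainR :: "(nat \<Rightarrow> 'a list set) \<Rightarrow> nat \<Rightarrow> ('a list \<Rightarrow>\<^sub>0 int) monoid" where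
  "chainR gens n = free_Abelian_group (gens n)"

definition chainD :: "(nat \<Rightarrow> 'a list set) \<Rightarrow> nat \<Rightarrow> ('a list \<Rightarrow>\<^sub>0 int) monoid" where
  "chainD gens n = free_Abelian_group (gens n \<inter> {xs. degenerate_tuple xs})"

definition chainQ :: "(nat \<Rightarrow> 'a list set) \<Rightarrow> nat \<Rightarrow> ('a list \<Rightarrow>\<^sub>0 int) set monoid" where
  "chainQ gens n = chainR gens n Mod carrier (chainD gens n)"

definition bdQ :: "(nat \<Rightarrow> 'a list set) \<Rightarrow> ('a \<Rightarrow> 'a \<Rightarrow> 'a) \<Rightarrow> nat
                    \<Rightarrow> ('a list \<Rightarrow>\<^sub>0 int) set \<Rightarrow> ('a list \<Rightarrow>\<^sub>0 int) set" where
  "bdQ gens op n A = r_coset (chainR gens (n - 1)) (carrier (chainD gens (n - 1)))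
                        (tuple_bd op (SOME a. a \<in> A))"

text \<open>Hom(G, Z) as an abelian group under pointwise addition (homomorphisms are
  taken extensional, i.e. 0 outside the carrier of G).\<close>
definition cochain_group :: "'c monoid \<Rightarrow> ('c \<Rightarrow> int) monoid" where
  "cochain_group G =
     \<lparr>carrier = {f \<in> hom G integer_group. \<forall>x. x \<notin> carrier G \<longrightarrow> f x = 0},
      monoid.mult = (\<lambda>f g x. f x + g x), one = (\<lambda>x. 0)\<rparr>"

definition coboundary_map :: "'c monoid \<Rightarrow> ('c \<Rightarrow> 'c) \<Rightarrow> ('c \<Rightarrow> int) \<Rightarrow> 'c \<Rightarrow> int" where
  "coboundary_map G bd f = (\<lambda>c. if c \<in> carrier G then f (bd c) else 0)"

text \<open>C n is the chain group in degree n, d n the boundary C n -> C (n-1).\<close>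
definition cocycles :: "(nat \<Rightarrow> 'c monoid) \<Rightarrow> (nat \<Rightarrow> 'c \<Rightarrow> 'c) \<Rightarrow> nat \<Rightarrow> ('c \<Rightarrow> int) set" where
  "cocycles C d n = {f \<in> carrier (cochain_group (C n)).
                      coboundary_map (C (Suc n)) (d (Suc n)) f = (\<lambda>x. 0)}"

definition coboundaries :: "(nat \<Rightarrow> 'c monoid) \<Rightarrow> (nat \<Rightarrow> 'c \<Rightarrow> 'c) \<Rightarrow> nat \<Rightarrow> ('c \<Rightarrow> int) set" where
  "coboundaries C d n =
     (if n = 0 then {\<lambda>x. 0}
      else coboundary_map (C n) (d n) ` carrier (cochain_group (C (n - 1))))"

definition cohomology :: "(nat \<Rightarrow> 'c monoid) \<Rightarrow> (nat \<Rightarrow> 'c \<Rightarrow> 'c) \<Rightarrow> nat \<Rightarrow> ('c \<Rightarrow> int) set monoid" where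
  "cohomology C d n =
     (cochain_group (C n))\<lparr>carrier := cocycles C d n\<rparr> Mod coboundaries C d n"

definition cohom_class :: "(nat \<Rightarrow> 'c monoid) \<Rightarrow> (nat \<Rightarrow> 'c \<Rightarrow> 'c) \<Rightarrow> nat
                            \<Rightarrow> ('c \<Rightarrow> int) \<Rightarrow> ('c \<Rightarrow> int) set" where
  "cohom_class C d n f = r_coset (cochain_group (C n)) (coboundaries C d n) f"

text \<open>"H^n = C^n": the canonical map C^n -> H^n is an isomorphism.\<close>
definition cohom_equals_cochains :: "(nat \<Rightarrow> 'c monoid) \<Rightarrow> (nat \<Rightarrow> 'c \<Rightarrow> 'c) \<Rightarrow> nat \<Rightarrow> bool" where
  "cohom_equals_cochains C d n \<longleftrightarrow>
     cohom_class C d n \<in> iso (cochain_group (C n)) (cohomology C d n)"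

abbreviation barCR where "barCR X \<equiv> chainR (barR_gens X)"
abbreviation barCD where "barCD X \<equiv> chainD (barR_gens X)"
abbreviation barCQ where "barCQ X \<equiv> chainQ (barR_gens X)"
abbreviation CR where "CR X \<equiv> chainR (R_gens X)"
abbreviation CD where "CD X \<equiv> chainD (R_gens X)"
abbreviation CQ where "CQ X \<equiv> chainQ (R_gens X)"

definition barHR where "barHR X op n = cohomology (barCR X) (\<lambda>_. tuple_bd op) n"
definition barHD where "barHD X op n = cohomology (barCD X) (\<lambda>_. tuple_bd op) n"
definition barHQ where "barHQ X op n = cohomology (barCQ X) (bdQ (barR_gens X) op) n"
definition HR where "HR X op n = cohomology (CR X) (\<lambda>_. tuple_bd op) n"
definition HD where "HD X op n = cohomology (CD X) (\<lambda>_. tuple_bd op) n"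
definition HQ where "HQ X op n = cohomology (CQ X) (bdQ (R_gens X) op) n"

end

theory Submission
  imports Defs
begin

lemma zero_in_hom: "(\<lambda>x. 0::int) \<in> hom G integer_group"
  by (auto simp: hom_def)

lemma zero_in_cochain: "(\<lambda>x. 0::int) \<in> carrier (cochain_group G)"
  by (auto simp: cochain_group_def zero_in_hom)

lemma cochain_group_group: "group (cochain_group G)"
proof (rule groupI)
  fix f g assume f: "f \<in> carrier (cochain_group G)" and g: "g \<in> carrier (cochain_group G)"
  then show "f \<otimes>\<^bsub>cochain_group G\<^esub> g \<in> carrier (cochain_group G)"
    by (auto simp: cochain_group_def hom_def)
next
  show "\<one>\<^bsub>cochain_group G\<^esub> \<in> carrier (cochain_group G)"
    using zero_in_cochain by (simp add: cochain_group_def)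
next
  fix f g h assume "f \<in> carrier (cochain_group G)" "g \<in> carrier (cochain_group G)" "h \<in> carrier (cochain_group G)"
  show "f \<otimes>\<^bsub>cochain_group G\<^esub> g \<otimes>\<^bsub>cochain_group G\<^esub> h = f \<otimes>\<^bsub>cochain_group G\<^esub> (g \<otimes>\<^bsub>cochain_group G\<^esub> h)"
    by (simp add: cochain_group_def add.assoc)
next
  fix f assume "f \<in> carrier (cochain_group G)"
  then show "\<one>\<^bsub>cochain_group G\<^esub> \<otimes>\<^bsub>cochain_group G\<^esub> f = f"
    by (simp add: cochain_group_def)
next
  fix f assume f: "f \<in> carrier (cochain_group G)"
  have "(\<lambda>x. - f x) \<in> carrier (cochain_group G)"
    using f by (auto simp: cochain_group_def hom_def)
  moreover have "(\<lambda>x. - f x) \<otimes>\<^bsub>cochain_group G\<^esub> f = \<one>\<^bsub>cochain_group G\<^esub>"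
    by (simp add: cochain_group_def)
  ultimately show "\<exists>y\<in>carrier (cochain_group G). y \<otimes>\<^bsub>cochain_group G\<^esub> f = \<one>\<^bsub>cochain_group G\<^esub>"
    by blast
qed

lemma cochain_vanish_one:
  assumes "group G" "f \<in> carrier (cochain_group G)"
  shows "f \<one>\<^bsub>G\<^esub> = 0"
proof -
  have "f \<in> hom G integer_group" using assms by (simp add: cochain_group_def)
  then have "f \<one>\<^bsub>G\<^esub> = \<one>\<^bsub>integer_group\<^esub>"
    using hom_one assms group_integer_group by blast
  then show ?thesis by simp
qed

lemma zero_bd_cohom:
  assumes grp: "\<And>k. group (C k)"
    and zero: "\<And>k c. c \<in> carrier (C (Suc k)) \<Longrightarrow> d (Suc k) c = \<one>\<^bsub>C k\<^esub>"
  shows "cohom_equals_cochains C d n"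
proof -
  have cb0: "coboundary_map (C (Suc k)) (d (Suc k)) f = (\<lambda>x. 0)"
    if "f \<in> carrier (cochain_group (C k))" for k f
    using cochain_vanish_one[OF grp that] zero by (auto simp: coboundary_map_def)
  let ?G = "cochain_group (C n)"
  have cocy: "cocycles C d n = carrier ?G"
    using cb0 by (auto simp: cocycles_def)
  have cobd: "coboundaries C d n = {\<lambda>x. 0}"
  proof (cases n)
    case 0 then show ?thesis by (simp add: coboundaries_def)
  next
    case (Suc k)
    then show ?thesis using cb0[of _ k] zero_in_cochain[of "C k"]
      unfolding coboundaries_def by auto
  qed
  have coh: "cohomology C d n = ?G Mod {\<lambda>x. 0}"
    unfolding cohomology_def cocy cobd by simp
  have cls: "cohom_class C d n f = {f}" for f
    unfolding cohom_class_def cobd by (simp add: r_coset_def cochain_group_def)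
  have rc: "rcosets\<^bsub>?G\<^esub> {\<lambda>x. 0} = (\<lambda>f. {f}) ` carrier ?G"
    by (auto simp: RCOSETS_def r_coset_def cochain_group_def)
  have h1: "(\<lambda>f. {f}) \<in> hom ?G (?G Mod {\<lambda>x. 0})"
    by (rule homI) (auto simp: FactGroup_def rc set_mult_def)
  have h2: "bij_betw (\<lambda>f. {f}) (carrier ?G) (carrier (?G Mod {\<lambda>x. 0}))"
    by (auto simp: bij_betw_def inj_on_def FactGroup_def rc)
  have "cohom_class C d n = (\<lambda>f. {f})" using cls by auto
  then show ?thesis
    unfolding cohom_equals_cochains_def coh using h1 h2 by (simp add: iso_def)
qed

lemma chainD_sub: "carrier (chainD gens n) \<subseteq> carrier (chainR gens n)"
  by (auto simp: chainD_def chainR_def)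

lemma chainD_subgroup: "subgroup (carrier (chainD gens n)) (chainR gens n)"
proof -
  interpret group "chainR gens n" by (simp add: chainR_def)
  show ?thesis
  proof (rule subgroupI)
    show "carrier (chainD gens n) \<subseteq> carrier (chainR gens n)" by (rule chainD_sub)
    show "carrier (chainD gens n) \<noteq> {}"
      using carrier_free_Abelian_group_iff[of 0] by (force simp: chainD_def)
    fix a assume a: "a \<in> carrier (chainD gens n)"
    then show "inv\<^bsub>chainR gens n\<^esub> a \<in> carrier (chainD gens n)"
      by (auto simp: chainD_def chainR_def)
    fix b assume "b \<in> carrier (chainD gens n)"
    with a show "a \<otimes>\<^bsub>chainR gens n\<^esub> b \<in> carrier (chainD gens n)"
      using keys_add[of a b] by (auto simp: chainD_def chainR_def)
  qed
qed

lemma chainD_normal: "carrier (chainD gens n) \<lhd> chainR gens n"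
  using comm_group.subgroup_imp_normal[OF abelian_free_Abelian_group chainD_subgroup[unfolded chainR_def]]
  by (simp add: chainR_def)

lemma group_chainR: "group (chainR gens n)" by (simp add: chainR_def)
lemma group_chainD: "group (chainD gens n)" by (simp add: chainD_def)
lemma group_chainQ: "group (chainQ gens n)"
  unfolding chainQ_def by (rule normal.factorgroup_is_group[OF chainD_normal])

lemma tuple_bd_zero:
  assumes "\<And>xs. xs \<in> gens n \<Longrightarrow> tuple_bd_gen op xs = 0"
    and "a \<in> carrier (chainR gens n)"
  shows "tuple_bd op a = 0"
  using assms unfolding tuple_bd_def chainR_def
  by (intro frag_extend_eq_0) auto

lemma bdQ_zero:
  assumes "\<And>a. a \<in> carrier (chainR gens (Suc k)) \<Longrightarrow> tuple_bd op a = 0"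
    and A: "A \<in> carrier (chainQ gens (Suc k))"
  shows "bdQ gens op (Suc k) A = \<one>\<^bsub>chainQ gens k\<^esub>"
proof -
  obtain x where x: "x \<in> carrier (chainR gens (Suc k))"
    and Ax: "A = carrier (chainD gens (Suc k)) #>\<^bsub>chainR gens (Suc k)\<^esub> x"
    using A by (auto simp: chainQ_def FactGroup_def RCOSETS_def)
  have "x \<in> A" unfolding Ax r_coset_def
    by (auto simp: chainD_def chainR_def intro!: bexI[of _ 0])
  then have ex: "\<exists>a. a \<in> A" by blast
  have sub: "A \<subseteq> carrier (chainR gens (Suc k))"
    using x keys_add unfolding Ax r_coset_def by (fastforce simp: chainD_def chainR_def)
  have "(SOME a. a \<in> A) \<in> A" using ex by (rule someI_ex)
  then have "tuple_bd op (SOME a. a \<in> A) = 0" using sub assms(1) by blast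
  then show ?thesis
    by (simp add: bdQ_def chainQ_def FactGroup_def r_coset_def chainR_def)
qed

lemma zero_bd_group:
  assumes grp: "\<And>k. group (C k)"
    and zero: "\<And>k c. c \<in> carrier (C (Suc k)) \<Longrightarrow> d (Suc k) c = \<one>\<^bsub>C k\<^esub>"
  shows "group (cohomology C d n)"
proof -
  have cb0: "coboundary_map (C (Suc k)) (d (Suc k)) f = (\<lambda>x. 0)"
    if "f \<in> carrier (cochain_group (C k))" for k f
    using cochain_vanish_one[OF grp that] zero by (auto simp: coboundary_map_def)
  let ?G = "cochain_group (C n)"
  have cocy: "cocycles C d n = carrier ?G"
    using cb0 by (auto simp: cocycles_def)
  have cobd: "coboundaries C d n = {\<lambda>x. 0}"
  proof (cases n)
    case 0 then show ?thesis by (simp add: coboundaries_def)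
  next
    case (Suc k)
    then show ?thesis using cb0[of _ k] zero_in_cochain[of "C k"]
      unfolding coboundaries_def by auto
  qed
  have coh: "cohomology C d n = ?G Mod {\<one>\<^bsub>?G\<^esub>}"
    unfolding cohomology_def cocy cobd by (simp add: cochain_group_def)
  show ?thesis unfolding coh
    by (rule normal.factorgroup_is_group[OF group.one_is_normal[OF cochain_group_group]])
qed

lemma cochain_trivial:
  assumes "group G" "carrier G = {\<one>\<^bsub>G\<^esub>}"
  shows "carrier (cochain_group G) = {\<lambda>x. 0}"
proof -
  have "f = (\<lambda>x. 0)" if f: "f \<in> carrier (cochain_group G)" for f
  proof
    fix x show "f x = 0"
    proof (cases "x \<in> carrier G")
      case True then show ?thesis using cochain_vanish_one[OF assms(1) f] assms(2) by simp
    next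
      case False then show ?thesis using f by (simp add: cochain_group_def)
    qed
  qed
  then show ?thesis using zero_in_cochain by blast
qed

lemma cochain_pull:
  assumes "group A" "h \<in> hom A B" "f \<in> carrier (cochain_group B)"
  shows "(\<lambda>x. if x \<in> carrier A then f (h x) else 0) \<in> carrier (cochain_group A)"
proof -
  have fh: "f \<in> hom B integer_group" using assms(3) by (simp add: cochain_group_def)
  have "(\<lambda>x. if x \<in> carrier A then f (h x) else 0) \<in> hom A integer_group"
  proof (rule homI)
    fix x y assume xy: "x \<in> carrier A" "y \<in> carrier A"
    then have "h (x \<otimes>\<^bsub>A\<^esub> y) = h x \<otimes>\<^bsub>B\<^esub> h y" using assms(2) by (simp add: hom_mult)
    moreover have "h x \<in> carrier B" "h y \<in> carrier B" using xy assms(2) hom_carrier by blast+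
    ultimately show "(if x \<otimes>\<^bsub>A\<^esub> y \<in> carrier A then f (h (x \<otimes>\<^bsub>A\<^esub> y)) else 0) =
       (if x \<in> carrier A then f (h x) else 0) \<otimes>\<^bsub>integer_group\<^esub> (if y \<in> carrier A then f (h y) else 0)"
      using xy fh group.subgroupE(4)[OF assms(1) group.subgroup_self[OF assms(1)]]
      by (simp add: hom_mult)
  qed simp
  then show ?thesis by (simp add: cochain_group_def)
qed

lemma cochain_iso:
  assumes gG: "group G" and gH: "group H" and psi: "\<psi> \<in> iso G H"
  shows "cochain_group H \<cong> cochain_group G"
proof -
  define \<phi> where "\<phi> = inv_into (carrier G) \<psi>"
  have phi: "\<phi> \<in> iso H G" unfolding \<phi>_def using group.iso_set_sym[OF gG psi] .
  have bij: "bij_betw \<psi> (carrier G) (carrier H)" using psi by (simp add: iso_def)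
  have phipsi: "\<phi> (\<psi> x) = x" if "x \<in> carrier G" for x
    unfolding \<phi>_def using bij that by (simp add: bij_betw_def inv_into_f_f)
  have psiphi: "\<psi> (\<phi> y) = y" if "y \<in> carrier H" for y
    unfolding \<phi>_def using bij that by (simp add: bij_betw_def f_inv_into_f)
  have phic: "\<phi> y \<in> carrier G" if "y \<in> carrier H" for y
    using phi that by (auto simp: iso_def dest!: hom_carrier)
  have psic: "\<psi> x \<in> carrier H" if "x \<in> carrier G" for x
    using psi that by (auto simp: iso_def dest!: hom_carrier)
  define F where "F = (\<lambda>f x. if x \<in> carrier G then f (\<psi> x) else (0::int))"
  have Fc: "F f \<in> carrier (cochain_group G)" if "f \<in> carrier (cochain_group H)" for f
    unfolding F_def using cochain_pull[OF gG _ that] psi by (simp add: iso_def)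
  have "F \<in> hom (cochain_group H) (cochain_group G)"
  proof (rule homI)
    fix f assume "f \<in> carrier (cochain_group H)" then show "F f \<in> carrier (cochain_group G)" by (rule Fc)
  next
    fix f g assume "f \<in> carrier (cochain_group H)" "g \<in> carrier (cochain_group H)"
    show "F (f \<otimes>\<^bsub>cochain_group H\<^esub> g) = F f \<otimes>\<^bsub>cochain_group G\<^esub> F g"
      by (auto simp: F_def cochain_group_def)
  qed
  moreover have "inj_on F (carrier (cochain_group H))"
  proof (rule inj_onI)
    fix f g assume f: "f \<in> carrier (cochain_group H)" and g: "g \<in> carrier (cochain_group H)"
      and eq: "F f = F g"
    show "f = g"
    proof
      fix y show "f y = g y"
      proof (cases "y \<in> carrier H")
        case True
        then have "F f (\<phi> y) = F g (\<phi> y)" using eq by simp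
        then show ?thesis using True phic psiphi by (simp add: F_def)
      next
        case False then show ?thesis using f g by (simp add: cochain_group_def)
      qed
    qed
  qed
  moreover have "F ` carrier (cochain_group H) \<supseteq> carrier (cochain_group G)"
  proof
    fix g assume g: "g \<in> carrier (cochain_group G)"
    define f where "f = (\<lambda>y. if y \<in> carrier H then g (\<phi> y) else 0)"
    have fc: "f \<in> carrier (cochain_group H)"
      unfolding f_def using cochain_pull[OF gH _ g] phi by (simp add: iso_def)
    have "F f = g"
    proof
      fix x show "F f x = g x"
        using g psic phipsi by (auto simp: F_def f_def cochain_group_def)
    qed
    then show "g \<in> F ` carrier (cochain_group H)" using fc by blast
  qed
  ultimately have "F \<in> iso (cochain_group H) (cochain_group G)"
    using Fc by (auto simp: iso_def bij_betw_def)
  then show ?thesis by (rule is_isoI)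
qed

lemma quot_iso:
  assumes "carrier (chainD gens k) = {0}"
  shows "(\<lambda>a. carrier (chainD gens k) #>\<^bsub>chainR gens k\<^esub> a) \<in> iso (chainR gens k) (chainQ gens k)"
proof -
  have rc: "carrier (chainD gens k) #>\<^bsub>chainR gens k\<^esub> a = {a}" for a
    using assms by (simp add: r_coset_def chainR_def)
  have "(\<lambda>a. carrier (chainD gens k) #>\<^bsub>chainR gens k\<^esub> a) \<in> hom (chainR gens k) (chainQ gens k)"
    unfolding chainQ_def by (rule normal.r_coset_hom_Mod[OF chainD_normal])
  moreover have "bij_betw (\<lambda>a. carrier (chainD gens k) #>\<^bsub>chainR gens k\<^esub> a) (carrier (chainR gens k)) (carrier (chainQ gens k))"
    unfolding bij_betw_def rc by (auto simp: inj_on_def chainQ_def FactGroup_def RCOSETS_def rc)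
  ultimately show ?thesis by (simp add: iso_def)
qed

lemma chainQ_trivial:
  assumes "gens k \<subseteq> {xs. degenerate_tuple xs}"
  shows "carrier (chainQ gens k) = {\<one>\<^bsub>chainQ gens k\<^esub>}"
proof -
  have eq: "carrier (chainD gens k) = carrier (chainR gens k)"
    using assms by (auto simp: chainD_def chainR_def)
  have "carrier (chainR gens k) #>\<^bsub>chainR gens k\<^esub> a = carrier (chainR gens k)"
    if "a \<in> carrier (chainR gens k)" for a
    using subgroup.rcos_const[OF group.subgroup_self[OF group_chainR] group_chainR that] .
  moreover have "(0::'a list \<Rightarrow>\<^sub>0 int) \<in> carrier (chainR gens k)" by (simp add: chainR_def)
  ultimately have "rcosets\<^bsub>chainR gens k\<^esub> (carrier (chainR gens k)) = {carrier (chainR gens k)}"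
    unfolding RCOSETS_def by blast
  then show ?thesis
    by (simp add: chainQ_def FactGroup_def eq)
qed

lemma tbg_short: "length xs \<le> 1 \<Longrightarrow> tuple_bd_gen op xs = 0"
  by (simp add: tuple_bd_gen_def)

lemma tbg_fix:
  assumes "\<And>i y. 2 \<le> i \<Longrightarrow> i \<le> length xs \<Longrightarrow> y \<in> set (take (i - 1) xs) \<Longrightarrow> op y (xs ! (i - 1)) = y"
  shows "tuple_bd_gen op xs = 0"
proof -
  have "tuple_act op i xs = tuple_del i xs" if "i \<in> {2..length xs}" for i
    unfolding tuple_act_def tuple_del_def using assms that by (auto intro!: map_idI)
  then show ?thesis unfolding tuple_bd_gen_def by (intro sum.neutral) simp
qed

lemma barR_gens_props:
  assumes "xs \<in> barR_gens X n"
  shows "length xs = Suc n" "set xs \<subseteq> topspace X"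
proof -
  obtain \<sigma> where s: "singular_simplex n X \<sigma>"
    and xs: "xs = map (\<lambda>i. \<sigma> (\<lambda>j. if j = i then 1 else 0)) [0..<Suc n]"
    using assms by (auto simp: barR_gens_def simplex_vertex_tuples_def)
  show "length xs = Suc n" using xs by simp
  have "\<sigma> (\<lambda>j. if j = i then 1 else 0) \<in> topspace X" if "i \<le> n" for i
    using s that unfolding singular_simplex_def
    by (metis (no_types, lifting) basis_in_standard_simplex continuous_map_def
        PiE topspace_standard_simplex)
  then show "set xs \<subseteq> topspace X" using xs by auto
qed

lemma barR_gens_discrete:
  assumes "X = discrete_topology (topspace X)" "xs \<in> barR_gens X n"
  shows "\<exists>a. xs = replicate (Suc n) a \<and> a \<in> topspace X"
proof -
  obtain \<sigma> where s: "singular_simplex n X \<sigma>"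
    and xs: "xs = map (\<lambda>i. \<sigma> (\<lambda>j. if j = i then 1 else 0)) [0..<Suc n]"
    using assms by (auto simp: barR_gens_def simplex_vertex_tuples_def)
  have c: "continuous_map (subtopology (powertop_real UNIV) (standard_simplex n)) X \<sigma>"
    using s by (simp add: singular_simplex_def)
  have "connectedin (subtopology (powertop_real UNIV) (standard_simplex n)) (standard_simplex n)"
    by (simp add: connectedin_subtopology connectedin_standard_simplex)
  then have "connectedin X (\<sigma> ` standard_simplex n)"
    using c connectedin_continuous_map_image by blast
  then obtain a where a: "\<sigma> ` standard_simplex n \<subseteq> {a}"
    using assms(1) connectedin_discrete_topology by metis
  have "\<sigma> (\<lambda>j. if j = i then 1 else 0) = a" if "i \<le> n" for i
    using a that basis_in_standard_simplex[of i n] by blast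
  then have "xs = map (\<lambda>i. a) [0..<Suc n]" unfolding xs
    by (intro map_cong) auto
  then have "xs = replicate (Suc n) a" by (simp add: map_replicate_const)
  moreover have "a \<in> topspace X"
    using barR_gens_props(2)[OF assms(2)] calculation by auto
  ultimately show ?thesis by blast
qed

lemma barR_gens_indiscrete:
  assumes "\<forall>S. openin X S \<longleftrightarrow> S = {} \<or> S = topspace X"
  shows "barR_gens X n = R_gens X (Suc n)"
proof
  show "barR_gens X n \<subseteq> R_gens X (Suc n)"
    using barR_gens_props by (fastforce simp: R_gens_def)
next
  show "R_gens X (Suc n) \<subseteq> barR_gens X n"
  proof
    fix xs assume "xs \<in> R_gens X (Suc n)"
    then have len: "length xs = Suc n" and st: "set xs \<subseteq> topspace X" by (auto simp: R_gens_def)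
    define \<sigma> where "\<sigma> = (\<lambda>t\<in>standard_simplex n. xs ! (LEAST i. t i \<noteq> 0))"
    have inT: "\<sigma> t \<in> topspace X" if t: "t \<in> standard_simplex n" for t
    proof -
      have "\<exists>i. i \<le> n \<and> t i \<noteq> 0"
      proof (rule ccontr)
        assume "\<not> ?thesis"
        then have "(\<Sum>i\<le>n. t i) = 0" by auto
        with t show False by (simp add: standard_simplex_def)
      qed
      then obtain i where "i \<le> n" "t i \<noteq> 0" by blast
      then have "(LEAST i. t i \<noteq> 0) \<le> n" by (meson Least_le order_trans)
      then show ?thesis using t len st by (auto simp: \<sigma>_def)
    qed
    have "continuous_map (subtopology (powertop_real UNIV) (standard_simplex n)) X \<sigma>"
      unfolding continuous_map_def
    proof (intro conjI allI impI)
      show "\<sigma> \<in> topspace (subtopology (powertop_real UNIV) (standard_simplex n)) \<rightarrow> topspace X"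
        using inT by auto
    next
      fix U assume "openin X U"
      then have "U = {} \<or> U = topspace X" using assms by blast
      then show "openin (subtopology (powertop_real UNIV) (standard_simplex n))
          {x \<in> topspace (subtopology (powertop_real UNIV) (standard_simplex n)). \<sigma> x \<in> U}"
      proof
        assume "U = {}" then show ?thesis by simp
      next
        assume "U = topspace X"
        then have "{x \<in> topspace (subtopology (powertop_real UNIV) (standard_simplex n)). \<sigma> x \<in> U}
           = topspace (subtopology (powertop_real UNIV) (standard_simplex n))"
          using inT by auto
        then show ?thesis by (simp del: topspace_subtopology)
      qed
    qed
    then have ss: "singular_simplex n X \<sigma>" unfolding singular_simplex_def \<sigma>_def by simp
    have "(LEAST j. (\<lambda>j. if j = i then 1 else (0::real)) j \<noteq> 0) = i" for i :: nat
      by (rule Least_equality) (auto split: if_splits)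
    then have "\<sigma> (\<lambda>j. if j = i then 1 else 0) = xs ! i" if "i \<le> n" for i
      using that by (simp add: \<sigma>_def)
    then have "map (\<lambda>i. \<sigma> (\<lambda>j. if j = i then 1 else 0)) [0..<Suc n] = map (nth xs) [0..<length xs]"
      using len by (intro map_cong) auto
    then have "map (\<lambda>i. \<sigma> (\<lambda>j. if j = i then 1 else 0)) [0..<Suc n] = xs"
      by (simp add: map_nth)
    then show "xs \<in> barR_gens X n"
      using ss unfolding barR_gens_def simplex_vertex_tuples_def by blast
  qed
qed

lemma coh_shift:
  assumes C: "\<And>k. C' k = C (Suc k)" and d: "\<And>k. k \<ge> 1 \<Longrightarrow> d' k = d (Suc k)"
    and cb: "coboundaries C d 1 = {\<lambda>x. 0}"
  shows "cohomology C' d' n = cohomology C d (Suc n)"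
proof -
  have "cocycles C' d' n = cocycles C d (Suc n)"
    by (simp add: cocycles_def C d)
  moreover have "coboundaries C' d' n = coboundaries C d (Suc n)"
  proof (cases n)
    case 0 then show ?thesis using cb by (simp add: coboundaries_def)
  next
    case (Suc m) then show ?thesis by (simp add: coboundaries_def C d)
  qed
  ultimately show ?thesis by (simp add: cohomology_def C)
qed

lemma cob1_zero:
  assumes "group (C 0)" "\<And>c. c \<in> carrier (C 1) \<Longrightarrow> d 1 c = \<one>\<^bsub>C 0\<^esub>"
  shows "coboundaries C d 1 = {\<lambda>x. 0}"
proof -
  have "coboundary_map (C 1) (d 1) f = (\<lambda>x. 0)" if "f \<in> carrier (cochain_group (C 0))" for f
    using cochain_vanish_one[OF assms(1) that] assms(2) by (auto simp: coboundary_map_def)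
  then show ?thesis using zero_in_cochain[of "C 0"] unfolding coboundaries_def by auto
qed

lemma all_zero:
  assumes tbg: "\<And>n xs. xs \<in> gens n \<Longrightarrow> tuple_bd_gen op xs = 0"
  shows "cohom_equals_cochains (chainR gens) (\<lambda>_. tuple_bd op) n"
    "cohom_equals_cochains (chainD gens) (\<lambda>_. tuple_bd op) n"
    "cohom_equals_cochains (chainQ gens) (bdQ gens op) n"
    "group (cohomology (chainQ gens) (bdQ gens op) n)"
proof -
  have tbz: "tuple_bd op a = 0" if "a \<in> carrier (chainR gens m)" for m a
    using tuple_bd_zero[OF tbg that] .
  have zR: "(\<lambda>_. tuple_bd op) (Suc k) c = \<one>\<^bsub>chainR gens k\<^esub>"
    if "c \<in> carrier (chainR gens (Suc k))" for k c
    using tbz[OF that] by (simp add: chainR_def)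
  have zD: "(\<lambda>_. tuple_bd op) (Suc k) c = \<one>\<^bsub>chainD gens k\<^esub>"
    if "c \<in> carrier (chainD gens (Suc k))" for k c
    using tbz[OF subsetD[OF chainD_sub that]] by (simp add: chainD_def)
  have zQ: "bdQ gens op (Suc k) c = \<one>\<^bsub>chainQ gens k\<^esub>"
    if "c \<in> carrier (chainQ gens (Suc k))" for k c
    using bdQ_zero[OF tbz that] .
  show "cohom_equals_cochains (chainR gens) (\<lambda>_. tuple_bd op) n"
    using zero_bd_cohom[where C="chainR gens" and d="\<lambda>_. tuple_bd op", OF group_chainR zR] .
  show "cohom_equals_cochains (chainD gens) (\<lambda>_. tuple_bd op) n"
    using zero_bd_cohom[where C="chainD gens" and d="\<lambda>_. tuple_bd op", OF group_chainD zD] .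
  show "cohom_equals_cochains (chainQ gens) (bdQ gens op) n"
    using zero_bd_cohom[where C="chainQ gens" and d="bdQ gens op", OF group_chainQ zQ] .
  show "group (cohomology (chainQ gens) (bdQ gens op) n)"
    using zero_bd_group[where C="chainQ gens" and d="bdQ gens op", OF group_chainQ zQ] .
qed

theorem mainTheorem11:
  fixes X :: "'a topology" and op :: "'a \<Rightarrow> 'a \<Rightarrow> 'a"
  assumes "topological_quandle X op"
  shows
   "(X = discrete_topology (topspace X) \<longrightarrow>
       (\<forall>n\<ge>1. trivial_group (barHQ X op n)
              \<and> cohom_equals_cochains (barCR X) (\<lambda>_. tuple_bd op) n
              \<and> cohom_equals_cochains (barCD X) (\<lambda>_. tuple_bd op) n)
       \<and> barHQ X op 0 \<cong> barHR X op 0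
       \<and> cohom_equals_cochains (barCR X) (\<lambda>_. tuple_bd op) 0)
    \<and> ((\<forall>S. openin X S \<longleftrightarrow> S = {} \<or> S = topspace X) \<longrightarrow>
       (\<forall>n. barHR X op n \<cong> HR X op (Suc n)
          \<and> barHD X op n \<cong> HD X op (Suc n)
          \<and> barHQ X op n \<cong> HQ X op (Suc n)))
    \<and> ((\<forall>x\<in>topspace X. \<forall>y\<in>topspace X. op x y = x) \<longrightarrow>
       (\<forall>n. cohom_equals_cochains (barCR X) (\<lambda>_. tuple_bd op) n
          \<and> cohom_equals_cochains (barCD X) (\<lambda>_. tuple_bd op) n
          \<and> cohom_equals_cochains (barCQ X) (bdQ (barR_gens X) op) n))"
proof (intro conjI impI)
  have idem: "\<And>x. x \<in> topspace X \<Longrightarrow> op x x = x"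
    using assms by (simp add: topological_quandle_def quandle_def)
  assume disc: "X = discrete_topology (topspace X)"
  have tbg: "tuple_bd_gen op xs = 0" if xs: "xs \<in> barR_gens X n" for n xs
  proof -
    obtain a where a: "xs = replicate (Suc n) a" "a \<in> topspace X"
      using barR_gens_discrete[OF disc xs] by blast
    show ?thesis
      by (rule tbg_fix) (auto simp: a idem dest: in_set_takeD)
  qed
  note Z = all_zero[where gens="barR_gens X" and op=op, OF tbg]
  show "\<forall>n\<ge>1. trivial_group (barHQ X op n)
              \<and> cohom_equals_cochains (barCR X) (\<lambda>_. tuple_bd op) n
              \<and> cohom_equals_cochains (barCD X) (\<lambda>_. tuple_bd op) n"
  proof (intro allI impI conjI)
    fix n :: nat assume n: "n \<ge> 1"
    show "cohom_equals_cochains (barCR X) (\<lambda>_. tuple_bd op) n" by (rule Z(1))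
    show "cohom_equals_cochains (barCD X) (\<lambda>_. tuple_bd op) n" by (rule Z(2))
    have "barR_gens X n \<subseteq> {xs. degenerate_tuple xs}"
    proof
      fix xs assume "xs \<in> barR_gens X n"
      then obtain a where a: "xs = replicate (Suc n) a"
        using barR_gens_discrete[OF disc] by blast
      show "xs \<in> {xs. degenerate_tuple xs}"
        using n by (auto simp: a degenerate_tuple_def intro!: exI[of _ 0])
    qed
    then have "carrier (barCQ X n) = {\<one>\<^bsub>barCQ X n\<^esub>}" by (rule chainQ_trivial)
    then have cc: "carrier (cochain_group (barCQ X n)) = {\<lambda>x. 0}"
      by (rule cochain_trivial[OF group_chainQ])
    have "bij_betw (cohom_class (barCQ X) (bdQ (barR_gens X) op) n)
         (carrier (cochain_group (barCQ X n))) (carrier (barHQ X op n))"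
      using Z(3)[where n=n] by (simp add: cohom_equals_cochains_def iso_def barHQ_def)
    then have "carrier (barHQ X op n) = {cohom_class (barCQ X) (bdQ (barR_gens X) op) n (\<lambda>x. 0)}"
      using cc by (simp add: bij_betw_def)
    moreover have "group (barHQ X op n)" using Z(4) by (simp add: barHQ_def)
    ultimately show "trivial_group (barHQ X op n)"
      using group.trivial_group by blast
  qed
  show "cohom_equals_cochains (barCR X) (\<lambda>_. tuple_bd op) 0" by (rule Z(1))
  have D0: "carrier (chainD (barR_gens X) 0) = {0}"
  proof -
    have "barR_gens X 0 \<inter> {xs. degenerate_tuple xs} = {}"
      using barR_gens_props(1) by (fastforce simp: degenerate_tuple_def)
    then show ?thesis by (auto simp: chainD_def)
  qed
  have "barHQ X op 0 \<cong> cochain_group (barCQ X 0)"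
    using group.iso_sym[OF cochain_group_group is_isoI[OF Z(3)[where n=0, unfolded cohom_equals_cochains_def]]]
    by (simp add: barHQ_def)
  also have "\<dots> \<cong> cochain_group (barCR X 0)"
    by (rule cochain_iso[OF group_chainR group_chainQ quot_iso[OF D0]])
  also have "\<dots> \<cong> barHR X op 0"
    using is_isoI[OF Z(1)[where n=0, unfolded cohom_equals_cochains_def]] by (simp add: barHR_def)
  finally show "barHQ X op 0 \<cong> barHR X op 0" .
next
  assume ind: "\<forall>S. openin X S \<longleftrightarrow> S = {} \<or> S = topspace X"
  have bg: "barR_gens X = (\<lambda>n. R_gens X (Suc n))"
    using barR_gens_indiscrete[OF ind] by (intro ext) simp
  have short: "tuple_bd op c = 0" if "c \<in> carrier (CR X 1)" for c
    using that by (rule tuple_bd_zero[rotated]) (simp add: R_gens_def tbg_short)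
  show "\<forall>n. barHR X op n \<cong> HR X op (Suc n)
          \<and> barHD X op n \<cong> HD X op (Suc n)
          \<and> barHQ X op n \<cong> HQ X op (Suc n)"
  proof (intro allI conjI)
    fix n
    have "barHR X op n = HR X op (Suc n)"
      unfolding barHR_def HR_def
    proof (rule coh_shift)
      show "coboundaries (CR X) (\<lambda>_. tuple_bd op) 1 = {\<lambda>x. 0}"
        by (rule cob1_zero[OF group_chainR]) (simp add: short chainR_def)
    qed (simp_all add: bg chainR_def)
    then show "barHR X op n \<cong> HR X op (Suc n)" using is_isoI[OF iso_set_refl] by metis
    have "barHD X op n = HD X op (Suc n)"
      unfolding barHD_def HD_def
    proof (rule coh_shift)
      show "coboundaries (CD X) (\<lambda>_. tuple_bd op) 1 = {\<lambda>x. 0}"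
        by (rule cob1_zero[OF group_chainD]) (simp add: short[OF subsetD[OF chainD_sub]] chainD_def)
    qed (simp_all add: bg chainD_def)
    then show "barHD X op n \<cong> HD X op (Suc n)" using is_isoI[OF iso_set_refl] by metis
    have "barHQ X op n = HQ X op (Suc n)"
      unfolding barHQ_def HQ_def
    proof (rule coh_shift)
      show "coboundaries (CQ X) (bdQ (R_gens X) op) 1 = {\<lambda>x. 0}"
        by (rule cob1_zero[OF group_chainQ]) (use bdQ_zero[OF short, of _ 0] in simp)
    next
      fix k :: nat assume "k \<ge> 1"
      then show "bdQ (barR_gens X) op k = bdQ (R_gens X) op (Suc k)"
        by (intro ext) (simp add: bdQ_def bg chainR_def chainD_def)
    qed (simp add: bg chainQ_def chainR_def chainD_def)
    then show "barHQ X op n \<cong> HQ X op (Suc n)" using is_isoI[OF iso_set_refl] by metis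
  qed
next
  assume triv: "\<forall>x\<in>topspace X. \<forall>y\<in>topspace X. op x y = x"
  have tbg: "tuple_bd_gen op xs = 0" if xs: "xs \<in> barR_gens X n" for n xs
  proof (rule tbg_fix)
    fix i y assume i: "2 \<le> i" "i \<le> length xs" and y: "y \<in> set (take (i - 1) xs)"
    have "y \<in> topspace X" using y barR_gens_props(2)[OF xs] by (auto dest: in_set_takeD)
    moreover have "xs ! (i - 1) \<in> topspace X"
      using i barR_gens_props(2)[OF xs] by (auto intro: subsetD[OF _ nth_mem])
    ultimately show "op y (xs ! (i - 1)) = y" using triv by blast
  qed
  show "\<forall>n. cohom_equals_cochains (barCR X) (\<lambda>_. tuple_bd op) n
          \<and> cohom_equals_cochains (barCD X) (\<lambda>_. tuple_bd op) n
          \<and> cohom_equals_cochains (barCQ X) (bdQ (barR_gens X) op) n"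
  proof (intro allI conjI)
    fix n
    show "cohom_equals_cochains (barCR X) (\<lambda>_. tuple_bd op) n"
      by (rule all_zero(1)) (rule tbg)
    show "cohom_equals_cochains (barCD X) (\<lambda>_. tuple_bd op) n"
      by (rule all_zero(2)) (rule tbg)
    show "cohom_equals_cochains (barCQ X) (bdQ (barR_gens X) op) n"
      by (rule all_zero(3)) (rule tbg)
  qed
qed

end
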